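(* For every integer $n\ge3$ with $n\not\equiv 2\pmod 4$ and every positive integer $s$, there exists a $(1,s,n)$-AONT.
   Context: Let $X$ be a finite alphabet with $|X|=v$ and $0\le t\le s$. A $(t,s,v)$-AONT is a bijection $\phi:X^s\to X^s$ such that for every $I\subseteq\{1,\dots,s\}$ with $|I|=t$ and every $J\subseteq\{1,\dots,s\}$ with $|J|=s-t$, the map $x\mapsto\big((x_i)_{i\in I},(\phi(x)_j)_{j\in J}\big)$ is a bijection $X^s\to X^t\times X^{s-t}$. *)

theory Defs
  imports "HOL-Library.FuncSet"
begin

text \<open>Words of length s over alphabet X, indexed by positions 0..s-1
  (the paper's positions 1..s shifted by one).\<close>
definition words :: "nat \<Rightarrow> 'a set \<Rightarrow> (nat \<Rightarrow> 'a) set" where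
  "words s X = PiE {..<s} (\<lambda>_. X)"

definition is_AONT :: "nat \<Rightarrow> nat \<Rightarrow> 'a set \<Rightarrow> ((nat \<Rightarrow> 'a) \<Rightarrow> (nat \<Rightarrow> 'a)) \<Rightarrow> bool" where
  "is_AONT t s X \<phi> \<longleftrightarrow>
     t \<le> s \<and>
     bij_betw \<phi> (words s X) (words s X) \<and>
     (\<forall>I J. I \<subseteq> {..<s} \<and> card I = t \<and> J \<subseteq> {..<s} \<and> card J = s - t \<longrightarrow>
        bij_betw (\<lambda>x. (restrict x I, restrict (\<phi> x) J)) (words s X)
                 (PiE I (\<lambda>_. X) \<times> PiE J (\<lambda>_. X)))"

end

theory Submission
  imports Defs
begin


definition mols :: "'a set \<Rightarrow> ('a\<Rightarrow>'a\<Rightarrow>'a) \<Rightarrow> ('a\<Rightarrow>'a\<Rightarrow>'a) \<Rightarrow> bool" where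
 "mols X Q R \<longleftrightarrow> (\<forall>a\<in>X. \<forall>b\<in>X. Q a b \<in> X \<and> R a b \<in> X) \<and>
   (\<forall>a\<in>X. \<forall>b\<in>X. \<forall>c\<in>X. (Q a c = Q b c \<longrightarrow> a = b) \<and> (Q c a = Q c b \<longrightarrow> a = b)
       \<and> (R a c = R b c \<longrightarrow> a = b) \<and> (R c a = R c b \<longrightarrow> a = b)) \<and>
   (\<forall>a\<in>X. \<forall>b\<in>X. \<forall>c\<in>X. \<forall>d\<in>X. Q a b = Q c d \<and> R a b = R c d \<longrightarrow> a = c \<and> b = d)"

context
  fixes X Q R assumes M: "mols X Q R"
begin
lemma mQ: "a \<in> X \<Longrightarrow> b \<in> X \<Longrightarrow> Q a b \<in> X" using M unfolding mols_def by blast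
lemma mR: "a \<in> X \<Longrightarrow> b \<in> X \<Longrightarrow> R a b \<in> X" using M unfolding mols_def by blast
lemma Q1: "Q a c = Q b c \<Longrightarrow> a \<in> X \<Longrightarrow> b \<in> X \<Longrightarrow> c \<in> X \<Longrightarrow> a = b" using M unfolding mols_def by blast
lemma Q2: "Q c a = Q c b \<Longrightarrow> a \<in> X \<Longrightarrow> b \<in> X \<Longrightarrow> c \<in> X \<Longrightarrow> a = b" using M unfolding mols_def by blast
lemma R1: "R a c = R b c \<Longrightarrow> a \<in> X \<Longrightarrow> b \<in> X \<Longrightarrow> c \<in> X \<Longrightarrow> a = b" using M unfolding mols_def by blast
lemma R2: "R c a = R c b \<Longrightarrow> a \<in> X \<Longrightarrow> b \<in> X \<Longrightarrow> c \<in> X \<Longrightarrow> a = b" using M unfolding mols_def by blast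
lemma QR: "Q a b = Q c d \<Longrightarrow> R a b = R c d \<Longrightarrow> a \<in> X \<Longrightarrow> b \<in> X \<Longrightarrow> c \<in> X \<Longrightarrow> d \<in> X \<Longrightarrow> a = c \<and> b = d"
  using M unfolding mols_def by blast
end

fun psi :: "('a\<Rightarrow>'a\<Rightarrow>'a) \<Rightarrow> ('a\<Rightarrow>'a\<Rightarrow>'a) \<Rightarrow> nat \<Rightarrow> (nat \<Rightarrow> 'a) \<Rightarrow> (nat \<Rightarrow> 'a)" where
  "psi Q R 0 x = (\<lambda>i. if i = 0 then x 0 else undefined)"
| "psi Q R (Suc k) x = (\<lambda>i. if i \<le> k then Q (psi Q R k x i) (x (Suc k))
      else if i = Suc k then R (psi Q R k x k) (x (Suc k)) else undefined)"

lemma psi_cong: "(\<forall>l\<le>k. x l = x' l) \<Longrightarrow> psi Q R k x = psi Q R k x'"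
  by (induction k) auto

lemma psi_undef: "i > k \<Longrightarrow> psi Q R k x i = undefined"
  by (induction k arbitrary: i) auto

lemma psi_in:
  assumes "mols X Q R" "\<forall>l\<le>k. x l \<in> X"
  shows "\<forall>i\<le>k. psi Q R k x i \<in> X"
  using assms(2)
proof (induction k)
  case 0 then show ?case by auto
next
  case (Suc k)
  then have IH: "\<forall>i\<le>k. psi Q R k x i \<in> X" by auto
  have c: "x (Suc k) \<in> X" using Suc by auto
  show ?case
  proof (intro allI impI)
    fix i assume "i \<le> Suc k"
    then consider "i \<le> k" | "i = Suc k" by linarith
    then show "psi Q R (Suc k) x i \<in> X"
      by cases (use IH c mQ[OF assms(1)] mR[OF assms(1)] in auto)
  qed
qed

lemma psi_inj:
  assumes "mols X Q R" "\<forall>l\<le>k. x l \<in> X" "\<forall>l\<le>k. x' l \<in> X"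
    "\<forall>i\<le>k. psi Q R k x i = psi Q R k x' i"
  shows "\<forall>l\<le>k. x l = x' l"
  using assms(2-)
proof (induction k)
  case 0 then show ?case by auto
next
  case (Suc k)
  have X1: "\<forall>l\<le>k. x l \<in> X" "\<forall>l\<le>k. x' l \<in> X" using Suc.prems by auto
  have Y: "\<forall>i\<le>k. psi Q R k x i \<in> X" "\<forall>i\<le>k. psi Q R k x' i \<in> X"
    using psi_in[OF assms(1)] X1 by auto
  have c: "x (Suc k) \<in> X" "x' (Suc k) \<in> X" using Suc.prems by auto
  have e1: "Q (psi Q R k x k) (x (Suc k)) = Q (psi Q R k x' k) (x' (Suc k))"
    using Suc.prems(3)[rule_format, of k] by simp
  have e2: "R (psi Q R k x k) (x (Suc k)) = R (psi Q R k x' k) (x' (Suc k))"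
    using Suc.prems(3)[rule_format, of "Suc k"] by simp
  have cc: "x (Suc k) = x' (Suc k)"
    using QR[OF assms(1) e1 e2] Y c by simp
  have "\<forall>i\<le>k. psi Q R k x i = psi Q R k x' i"
  proof (intro allI impI)
    fix i assume ik: "i \<le> k"
    then have "Q (psi Q R k x i) (x (Suc k)) = Q (psi Q R k x' i) (x (Suc k))"
      using Suc.prems(3)[rule_format, of i] cc by simp
    then show "psi Q R k x i = psi Q R k x' i"
      using Q1[OF assms(1)] Y c ik by simp
  qed
  then have "\<forall>l\<le>k. x l = x' l" using Suc.IH X1 by blast
  then show ?case using cc by (auto simp: le_Suc_eq)
qed

lemma psi_latin:
  assumes "mols X Q R" "\<forall>l\<le>k. x l \<in> X" "\<forall>l\<le>k. x' l \<in> X"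
    "j \<le> k" "\<forall>l\<le>k. l \<noteq> j \<longrightarrow> x l = x' l" "i \<le> k" "psi Q R k x i = psi Q R k x' i"
  shows "x j = x' j"
  using assms(2-)
proof (induction k arbitrary: i)
  case 0 then show ?case by auto
next
  case (Suc k)
  have X1: "\<forall>l\<le>k. x l \<in> X" "\<forall>l\<le>k. x' l \<in> X" using Suc.prems by auto
  have Y: "\<forall>i\<le>k. psi Q R k x i \<in> X" "\<forall>i\<le>k. psi Q R k x' i \<in> X"
    using psi_in[OF assms(1)] X1 by auto
  have c: "x (Suc k) \<in> X" "x' (Suc k) \<in> X" using Suc.prems by auto
  show ?case
  proof (cases "j = Suc k")
    case True
    then have "\<forall>l\<le>k. x l = x' l" using Suc.prems by auto
    then have yy: "psi Q R k x = psi Q R k x'" by (rule psi_cong)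
    show ?thesis
    proof (cases "i = Suc k")
      case True
      then have "R (psi Q R k x k) (x (Suc k)) = R (psi Q R k x k) (x' (Suc k))"
        using Suc.prems(6) yy by simp
      then show ?thesis using R2[OF assms(1)] Y c \<open>j = Suc k\<close> by simp
    next
      case False
      then have ik: "i \<le> k" using Suc.prems by auto
      then have "Q (psi Q R k x i) (x (Suc k)) = Q (psi Q R k x i) (x' (Suc k))"
        using Suc.prems(6) yy by simp
      then show ?thesis using Q2[OF assms(1)] Y c ik \<open>j = Suc k\<close> by simp
    qed
  next
    case False
    then have jk: "j \<le> k" using Suc.prems by auto
    have cc: "x (Suc k) = x' (Suc k)" using Suc.prems False by auto
    have i': "psi Q R k x (min i k) = psi Q R k x' (min i k)"
    proof (cases "i = Suc k")
      case True
      then have "R (psi Q R k x k) (x (Suc k)) = R (psi Q R k x' k) (x (Suc k))"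
        using Suc.prems(6) cc by simp
      then show ?thesis using R1[OF assms(1)] Y c True by simp
    next
      case False
      then have ik: "i \<le> k" using Suc.prems by auto
      then have "Q (psi Q R k x i) (x (Suc k)) = Q (psi Q R k x' i) (x (Suc k))"
        using Suc.prems(6) cc by simp
      then show ?thesis using Q1[OF assms(1)] Y c ik by simp
    qed
    have "\<forall>l\<le>k. l \<noteq> j \<longrightarrow> x l = x' l" using Suc.prems(4) by auto
    then show ?thesis
      using Suc.IH[OF X1 jk _ _ i'] by simp
  qed
qed


lemma words_mem:
  assumes "x \<in> words s X" "s = Suc k" shows "\<forall>l\<le>k. x l \<in> X"
proof (intro allI impI)
  fix l assume "l \<le> k"
  then have "l \<in> {..<s}" using assms(2) by simp
  then show "x l \<in> X" using PiE_mem[OF assms(1)[unfolded words_def]] by blast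
qed

lemma aont_from_mols:
  assumes M: "mols X Q R" and fin: "finite X" and s: "s \<ge> 1"
  shows "\<exists>\<phi>. is_AONT 1 s X \<phi>"
proof -
  define k where "k = s - 1"
  have sk: "s = Suc k" using s k_def by simp
  define W where "W = words s X"
  have finW: "finite W" unfolding W_def words_def using fin by (simp add: finite_PiE)
  define P where "P x = restrict (psi Q R k x) {..<s}" for x
  have Pin: "P x \<in> W" if "x \<in> W" for x
  proof -
    have "\<forall>i\<le>k. psi Q R k x i \<in> X"
      using psi_in[OF M words_mem[OF that[unfolded W_def] sk]] .
    then show ?thesis unfolding P_def W_def words_def sk by auto
  qed
  have Pinj: "inj_on P W"
  proof (rule inj_onI)
    fix x x' assume x: "x \<in> W" and x': "x' \<in> W" and e: "P x = P x'"
    have "\<forall>i\<le>k. psi Q R k x i = psi Q R k x' i"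
    proof (intro allI impI)
      fix i assume "i \<le> k"
      then show "psi Q R k x i = psi Q R k x' i"
        using fun_cong[OF e, of i] unfolding P_def sk by simp
    qed
    then have "\<forall>l\<le>k. x l = x' l"
      using psi_inj[OF M words_mem[OF x[unfolded W_def] sk] words_mem[OF x'[unfolded W_def] sk]] by blast
    then show "x = x'"
      by (intro PiE_ext[OF x[unfolded W_def words_def] x'[unfolded W_def words_def]]) (auto simp: sk)
  qed
  have Pbij: "bij_betw P W W"
    unfolding bij_betw_def using Pinj endo_inj_surj[OF finW _ Pinj] Pin by blast
  define \<phi> where "\<phi> = the_inv_into W P"
  have phibij: "bij_betw \<phi> W W" unfolding \<phi>_def by (rule bij_betw_the_inv_into[OF Pbij])
  have Pphi: "P (\<phi> y) = y" if "y \<in> W" for y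
    unfolding \<phi>_def using f_the_inv_into_f_bij_betw[OF Pbij] that by blast
  have phiW: "\<phi> y \<in> W" if "y \<in> W" for y using phibij that unfolding bij_betw_def by blast
  have cardW: "card W = card X ^ s" unfolding W_def words_def by (simp add: card_PiE)
  have main: "bij_betw (\<lambda>x. (restrict x I, restrict (\<phi> x) J)) W
                 (PiE I (\<lambda>_. X) \<times> PiE J (\<lambda>_. X))"
    if I: "I \<subseteq> {..<s}" "card I = 1" and J: "J \<subseteq> {..<s}" "card J = s - 1" for I J
  proof -
    define F where "F = (\<lambda>x. (restrict x I, restrict (\<phi> x) J))"
    obtain i0 where i0: "I = {i0}" using I(2) by (meson card_1_singletonE)
    have i0s: "i0 < s" using I(1) i0 by auto
    have "card ({..<s} - J) = 1" using J s by (simp add: card_Diff_subset finite_subset)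
    then obtain j where j: "{..<s} - J = {j}" by (meson card_1_singletonE)
    have "j \<in> {..<s}" using j by blast
    then have js: "j \<le> k" using sk by simp
    have inJ: "l \<in> J" if "l \<le> k" "l \<noteq> j" for l
    proof -
      have "l \<in> {..<s}" using that sk by simp
      then show ?thesis using that(2) j by blast
    qed
    have Finj: "inj_on F W"
    proof (rule inj_onI)
      fix x x' assume x: "x \<in> W" and x': "x' \<in> W" and e: "F x = F x'"
      define z where "z = \<phi> x"
      define z' where "z' = \<phi> x'"
      have z: "z \<in> W" "z' \<in> W" using phiW x x' z_def z'_def by auto
      have xz: "x = P z" "x' = P z'" using Pphi x x' z_def z'_def by auto
      have agree: "\<forall>l\<le>k. l \<noteq> j \<longrightarrow> z l = z' l"
      proof (intro allI impI)
        fix l assume "l \<le> k" "l \<noteq> j"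
        then have "l \<in> J" by (rule inJ)
        then show "z l = z' l" using fun_cong[OF arg_cong[OF e, of snd], of l]
          unfolding F_def z_def z'_def by simp
      qed
      have "x i0 = x' i0" using fun_cong[OF arg_cong[OF e, of fst], of i0] i0
        unfolding F_def by simp
      then have "psi Q R k z i0 = psi Q R k z' i0"
        using xz i0s unfolding P_def by simp
      then have "z j = z' j"
        using psi_latin[OF M words_mem[OF z(1)[unfolded W_def] sk] words_mem[OF z(2)[unfolded W_def] sk]
            js agree, of i0] i0s sk by simp
      then have "\<forall>l\<le>k. z l = z' l" using agree by metis
      then have "z = z'"
        by (intro PiE_ext[OF z(1)[unfolded W_def words_def] z(2)[unfolded W_def words_def]]) (auto simp: sk)
      then show "x = x'" using xz by simp
    qed
    have Fsub: "F ` W \<subseteq> PiE I (\<lambda>_. X) \<times> PiE J (\<lambda>_. X)"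
    proof
      fix y assume "y \<in> F ` W"
      then obtain x where x: "x \<in> W" "y = F x" by blast
      have "\<phi> x \<in> W" using phiW x by simp
      then show "y \<in> PiE I (\<lambda>_. X) \<times> PiE J (\<lambda>_. X)"
        using x I(1) J(1) unfolding F_def W_def words_def by auto
    qed
    have finT: "finite (PiE I (\<lambda>_. X) \<times> PiE J (\<lambda>_. X))"
      using fin I J by (simp add: finite_PiE finite_subset)
    have "card (PiE I (\<lambda>_. X) \<times> PiE J (\<lambda>_. X)) = card X ^ 1 * card X ^ (s - 1)"
      using I J by (simp add: card_cartesian_product card_PiE finite_subset)
    also have "\<dots> = card W" using cardW sk by simp
    also have "\<dots> = card (F ` W)" using card_image[OF Finj] by simp
    finally have "F ` W = PiE I (\<lambda>_. X) \<times> PiE J (\<lambda>_. X)"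
      using card_subset_eq[OF finT Fsub] by simp
    then show ?thesis unfolding bij_betw_def F_def[symmetric] using Finj by simp
  qed
  have "is_AONT 1 s X \<phi>"
    unfolding is_AONT_def
  proof (intro conjI allI impI)
    show "1 \<le> s" using s .
    show "bij_betw \<phi> (words s X) (words s X)" using phibij unfolding W_def .
    fix I J assume H: "I \<subseteq> {..<s} \<and> card I = 1 \<and> J \<subseteq> {..<s} \<and> card J = s - 1"
    show "bij_betw (\<lambda>x. (restrict x I, restrict (\<phi> x) J)) (words s X) (PiE I (\<lambda>_. X) \<times> PiE J (\<lambda>_. X))"
      using main[of I J] H unfolding W_def by blast
  qed
  then show ?thesis by blast
qed



lemma dvd_small: "0 < (m::int) \<Longrightarrow> m dvd d \<Longrightarrow> -m < d \<Longrightarrow> d < m \<Longrightarrow> d = 0"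
  by (cases "d = 0") (use dvd_imp_le_int[of d m] in auto)

lemma dvd_small2: assumes "0 < (m::int)" "m dvd d" "-m \<le> d" "d \<le> m" shows "d = -m \<or> d = 0 \<or> d = m"
proof -
  consider "d = -m" | "d = m" | "-m < d" "d < m" using assms by linarith
  then show ?thesis using dvd_small[OF assms(1,2)] by cases auto
qed

lemma modinj: "0 < (m::int) \<Longrightarrow> 0 \<le> a \<Longrightarrow> a < m \<Longrightarrow> 0 \<le> a' \<Longrightarrow> a' < m \<Longrightarrow>
   (a + c) mod m = (a' + c) mod m \<Longrightarrow> a = a'"
  using dvd_small[of m "a - a'"] by (simp add: mod_eq_dvd_iff)

lemma modinj': "0 < (m::int) \<Longrightarrow> 0 \<le> a \<Longrightarrow> a < m \<Longrightarrow> 0 \<le> a' \<Longrightarrow> a' < m \<Longrightarrow>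
   (c + a) mod m = (c + a') mod m \<Longrightarrow> a = a'"
  using modinj[of m a a' c] by (simp add: add.commute)

lemma div2_lt: "(b::int) < 2*k \<Longrightarrow> b div 2 < k" by linarith
lemma div2_nn: "0 \<le> (b::int) \<Longrightarrow> 0 \<le> b div 2" by simp
lemma same_div2: "b1 div 2 = b2 div 2 \<Longrightarrow> 2 dvd ((b1::int) - b2) \<Longrightarrow> b1 = b2" by presburger
lemma ceil2: "0 \<le> (b::int) \<Longrightarrow> b < 2*k \<Longrightarrow> 0 \<le> b - b div 2 \<and> b - b div 2 \<le> k \<and> (b - b div 2 = k \<longrightarrow> b = 2*k - 1)
   \<and> (b - b div 2 = 0 \<longrightarrow> b = 0)" by linarith
lemma same_ceil2: "b1 - b1 div 2 = b2 - b2 div 2 \<Longrightarrow> 2 dvd ((b1::int) - b2) \<Longrightarrow> b1 = b2" by presburger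

lemma theta_inj:
  fixes k e1 e2 b1 b2 x y :: int
  assumes "0 < k" "e1 \<in> {0,1}" "e2 \<in> {0,1}" "0 \<le> b1" "b1 < 2*k" "0 \<le> b2" "b2 < 2*k"
    "(x + (e1 + b1)) mod 2 = (x + (e2 + b2)) mod 2"
    "(y + (b1 div 2 + e1*k)) mod (2*k) = (y + (b2 div 2 + e2*k)) mod (2*k)"
  shows "e1 = e2 \<and> b1 = b2"
proof -
  have d1: "2 dvd ((e1 + b1) - (e2 + b2))" using assms(8) by (simp add: mod_eq_dvd_iff)
  have d2: "(2*k) dvd ((b1 div 2 + e1*k) - (b2 div 2 + e2*k))" using assms(9) by (simp add: mod_eq_dvd_iff)
  have q: "0 \<le> b1 div 2" "b1 div 2 < k" "0 \<le> b2 div 2" "b2 div 2 < k"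
    using div2_lt div2_nn assms(4-7) by auto
  have ek: "e1*k \<in> {0,k}" "e2*k \<in> {0,k}" using assms(2,3) by auto
  have "(b1 div 2 + e1*k) - (b2 div 2 + e2*k) = 0"
    apply (rule dvd_small[OF _ d2])
    using assms(1) q ek by auto
  then have e: "e1 = e2" and qq: "b1 div 2 = b2 div 2" using q ek assms(1-3) by auto
  then have "2 dvd (b1 - b2)" using d1 by simp
  then show ?thesis using e same_div2[OF qq] by simp
qed

lemma orth_inj:
  fixes k e2 e2' b2 b2' :: int
  assumes "0 < k" "e2 \<in> {0,1}" "e2' \<in> {0,1}" "0 \<le> b2" "b2 < 2*k" "0 \<le> b2'" "b2' < 2*k"
    "2 dvd (b2 - b2')"
    "(2*k) dvd ((b2 - b2 div 2 - e2*k) - (b2' - b2' div 2 - e2'*k))"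
  shows "e2 = e2' \<and> b2 = b2'"
proof -
  define c1 where "c1 = b2 - b2 div 2"
  define c2 where "c2 = b2' - b2' div 2"
  have c: "0 \<le> c1" "c1 \<le> k" "c1 = k \<longrightarrow> b2 = 2*k - 1" "c1 = 0 \<longrightarrow> b2 = 0"
          "0 \<le> c2" "c2 \<le> k" "c2 = k \<longrightarrow> b2' = 2*k - 1" "c2 = 0 \<longrightarrow> b2' = 0"
    unfolding c1_def c2_def using ceil2[OF assms(4,5)] ceil2[OF assms(6,7)] by blast+
  have dv: "(2*k) dvd ((c1 - e2*k) - (c2 - e2'*k))" using assms(9) unfolding c1_def c2_def by simp
  have ek: "e2*k = 0 \<or> e2*k = k" "e2'*k = 0 \<or> e2'*k = k" using assms(2,3) by auto
  have lb: "-(2*k) \<le> (c1 - e2*k) - (c2 - e2'*k)" and ub: "(c1 - e2*k) - (c2 - e2'*k) \<le> 2*k"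
    using ek c(1,2,5,6) by linarith+
  have D: "(c1 - e2*k) - (c2 - e2'*k) = -(2*k) \<or> (c1 - e2*k) - (c2 - e2'*k) = 0 \<or>
        (c1 - e2*k) - (c2 - e2'*k) = 2*k"
    using dvd_small2[OF _ dv lb ub] assms(1) by simp
  have odd1: "\<not> 2 dvd (2*k - 1 - 0)" "\<not> 2 dvd (0 - (2*k - 1))" by presburger+
  show ?thesis
  proof (cases "e2 = e2'")
    case True
    then have "c1 - c2 = -(2*k) \<or> c1 - c2 = 0 \<or> c1 - c2 = 2*k" using D by (simp add: algebra_simps)
    then have "c1 = c2" using c(1,2,5,6) assms(1) by linarith
    then show ?thesis using True same_ceil2 assms(8) unfolding c1_def c2_def by blast
  next
    case False
    then consider "e2 = 1" "e2' = 0" | "e2 = 0" "e2' = 1" using assms(2,3) by auto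
    then show ?thesis
    proof cases
      case 1
      then have "c1 - c2 - k = -(2*k) \<or> c1 - c2 - k = 0 \<or> c1 - c2 - k = 2*k" using D by (simp, arith)
      then have "(c1 = 0 \<and> c2 = k) \<or> (c1 = k \<and> c2 = 0)" using c(1,2,5,6) assms(1) by linarith
      then have "(b2 = 0 \<and> b2' = 2*k - 1) \<or> (b2 = 2*k - 1 \<and> b2' = 0)" using c by blast
      then show ?thesis using odd1 assms(8) by auto
    next
      case 2
      then have "c1 + k - c2 = -(2*k) \<or> c1 + k - c2 = 0 \<or> c1 + k - c2 = 2*k" using D by (simp, arith)
      then have "(c1 = 0 \<and> c2 = k) \<or> (c1 = k \<and> c2 = 0)" using c(1,2,5,6) assms(1) by linarith
      then have "(b2 = 0 \<and> b2' = 2*k - 1) \<or> (b2 = 2*k - 1 \<and> b2' = 0)" using c by blast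
      then show ?thesis using odd1 assms(8) by auto
    qed
  qed
qed

definition Qe :: "int \<Rightarrow> int\<times>int \<Rightarrow> int\<times>int \<Rightarrow> int\<times>int" where
  "Qe k x y = ((fst x + fst y) mod 2, (snd x + snd y) mod (2*k))"
definition Re :: "int \<Rightarrow> int\<times>int \<Rightarrow> int\<times>int \<Rightarrow> int\<times>int" where
  "Re k x y = ((fst x + (fst y + snd y)) mod 2, (snd x + (snd y div 2 + fst y * k)) mod (2*k))"

lemma mols_even:
  assumes k: "0 < k"
  shows "mols ({0..<2} \<times> {0..<2*k}) (Qe k) (Re k)"
  unfolding mols_def
proof (intro conjI ballI)
  let ?S = "{0..<2} \<times> {0..<2*k} :: (int\<times>int) set"
  fix a b assume "a \<in> ?S" "b \<in> ?S"
  then show "Qe k a b \<in> ?S" "Re k a b \<in> ?S" using k by (auto simp: Qe_def Re_def)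
next
  let ?S = "{0..<2} \<times> {0..<2*k} :: (int\<times>int) set"
  fix a b c assume a: "a \<in> ?S" and b: "b \<in> ?S" and c: "c \<in> ?S"
  obtain a1 a2 where [simp]: "a = (a1, a2)" by fastforce
  obtain b1 b2 where [simp]: "b = (b1, b2)" by fastforce
  obtain c1 c2 where [simp]: "c = (c1, c2)" by fastforce
  have r: "0 \<le> a1" "a1 < 2" "0 \<le> a2" "a2 < 2*k" "0 \<le> b1" "b1 < 2" "0 \<le> b2" "b2 < 2*k"
     "0 \<le> c1" "c1 < 2" "0 \<le> c2" "c2 < 2*k" using a b c by auto
  have e: "a1 \<in> {0,1}" "b1 \<in> {0,1}" using r by auto
  show "Qe k a c = Qe k b c \<longrightarrow> a = b"
    using modinj[of 2 a1 b1 c1] modinj[of "2*k" a2 b2 c2] r k by (auto simp: Qe_def)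
  show "Qe k c a = Qe k c b \<longrightarrow> a = b"
    using modinj'[of 2 a1 b1 c1] modinj'[of "2*k" a2 b2 c2] r k by (auto simp: Qe_def)
  show "Re k a c = Re k b c \<longrightarrow> a = b"
    using modinj[of 2 a1 b1 "c1 + c2"] modinj[of "2*k" a2 b2 "c2 div 2 + c1 * k"] r k by (auto simp: Re_def)
  show "Re k c a = Re k c b \<longrightarrow> a = b"
    using theta_inj[of k a1 b1 a2 b2 c1 c2] e r k by (auto simp: Re_def mult.commute)
next
  let ?S = "{0..<2} \<times> {0..<2*k} :: (int\<times>int) set"
  fix a b c d assume a: "a \<in> ?S" and b: "b \<in> ?S" and c: "c \<in> ?S" and d: "d \<in> ?S"
  obtain a1 a2 where [simp]: "a = (a1, a2)" by fastforce
  obtain b1 b2 where [simp]: "b = (b1, b2)" by fastforce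
  obtain c1 c2 where [simp]: "c = (c1, c2)" by fastforce
  obtain d1 d2 where [simp]: "d = (d1, d2)" by fastforce
  have r: "0 \<le> a1" "a1 < 2" "0 \<le> a2" "a2 < 2*k" "0 \<le> b1" "b1 < 2" "0 \<le> b2" "b2 < 2*k"
     "0 \<le> c1" "c1 < 2" "0 \<le> c2" "c2 < 2*k" "0 \<le> d1" "d1 < 2" "0 \<le> d2" "d2 < 2*k"
    using a b c d by auto
  show "Qe k a b = Qe k c d \<and> Re k a b = Re k c d \<longrightarrow> a = c \<and> b = d"
  proof
    assume H: "Qe k a b = Qe k c d \<and> Re k a b = Re k c d"
    have h1: "(a1 + b1) mod 2 = (c1 + d1) mod 2" and h2: "(a2 + b2) mod (2*k) = (c2 + d2) mod (2*k)"
      and h3: "(a1 + (b1 + b2)) mod 2 = (c1 + (d1 + d2)) mod 2"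
      and h4: "(a2 + (b2 div 2 + b1 * k)) mod (2*k) = (c2 + (d2 div 2 + d1 * k)) mod (2*k)"
      using H by (auto simp: Qe_def Re_def)
    have g1: "2 dvd ((a1 + b1) - (c1 + d1))" using h1 by (simp add: mod_eq_dvd_iff)
    have g3: "2 dvd ((a1 + (b1 + b2)) - (c1 + (d1 + d2)))" using h3 by (simp add: mod_eq_dvd_iff)
    have g2: "(2*k) dvd ((a2 + b2) - (c2 + d2))" using h2 by (simp only: mod_eq_dvd_iff)
    have g4: "(2*k) dvd ((a2 + (b2 div 2 + b1 * k)) - (c2 + (d2 div 2 + d1 * k)))"
      using h4 by (simp only: mod_eq_dvd_iff)
    have "2 dvd (((a1 + (b1 + b2)) - (c1 + (d1 + d2))) - ((a1 + b1) - (c1 + d1)))"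
      using g1 g3 by (rule dvd_diff[rotated])
    then have p: "2 dvd (b2 - d2)" by (simp add: algebra_simps)
    have "(2*k) dvd (((a2 + b2) - (c2 + d2)) - ((a2 + (b2 div 2 + b1 * k)) - (c2 + (d2 div 2 + d1 * k))))"
      using g2 g4 by (rule dvd_diff)
    moreover have "((a2 + b2) - (c2 + d2)) - ((a2 + (b2 div 2 + b1 * k)) - (c2 + (d2 div 2 + d1 * k)))
        = (b2 - b2 div 2 - b1*k) - (d2 - d2 div 2 - d1*k)" by (simp add: algebra_simps)
    ultimately have q: "(2*k) dvd ((b2 - b2 div 2 - b1*k) - (d2 - d2 div 2 - d1*k))" by simp
    have bd: "b1 = d1 \<and> b2 = d2"
      by (rule orth_inj[OF k _ _ _ _ _ _ p q]) (use r in auto)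
    then have "a1 = c1" "a2 = c2"
      using modinj[of 2 a1 c1 b1] modinj[of "2*k" a2 c2 b2] h1 h2 r k by auto
    then show "a = c \<and> b = d" using bd by simp
  qed
qed

lemma odd_dvd2: "odd (n::int) \<Longrightarrow> n dvd 2 * d \<Longrightarrow> n dvd d"
  using coprime_dvd_mult_right_iff coprime_right_2_iff_odd by blast

lemma mols_odd:
  assumes n: "odd (n::int)" "0 < n"
  shows "mols {0..<n} (\<lambda>a b. (a + b) mod n) (\<lambda>a b. (a + 2*b) mod n)"
  unfolding mols_def
proof (intro conjI ballI)
  fix a b assume "a \<in> {0..<n}" "b \<in> {0..<n}"
  then show "(a + b) mod n \<in> {0..<n}" "(a + 2*b) mod n \<in> {0..<n}" using n by auto
next
  fix a b c assume a: "a \<in> {0..<n}" and b: "b \<in> {0..<n}" and c: "c \<in> {0..<n}"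
  show "(a + c) mod n = (b + c) mod n \<longrightarrow> a = b" using modinj[of n a b c] a b n by auto
  show "(c + a) mod n = (c + b) mod n \<longrightarrow> a = b" using modinj'[of n a b c] a b n by auto
  show "(a + 2*c) mod n = (b + 2*c) mod n \<longrightarrow> a = b" using modinj[of n a b "2*c"] a b n by auto
  show "(c + 2*a) mod n = (c + 2*b) mod n \<longrightarrow> a = b"
  proof
    assume "(c + 2*a) mod n = (c + 2*b) mod n"
    then have "n dvd (c + 2*a) - (c + 2*b)" by (simp only: mod_eq_dvd_iff)
    then have "n dvd 2 * (a - b)" by (simp add: algebra_simps)
    then have "n dvd (a - b)" using odd_dvd2 n by blast
    then show "a = b" using dvd_small[of n "a - b"] a b n by auto
  qed
next
  fix a b c d assume a: "a \<in> {0..<n}" and b: "b \<in> {0..<n}" and c: "c \<in> {0..<n}" and d: "d \<in> {0..<n}"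
  show "(a + b) mod n = (c + d) mod n \<and> (a + 2*b) mod n = (c + 2*d) mod n \<longrightarrow> a = c \<and> b = d"
  proof
    assume H: "(a + b) mod n = (c + d) mod n \<and> (a + 2*b) mod n = (c + 2*d) mod n"
    then have "n dvd (a + b) - (c + d)" "n dvd (a + 2*b) - (c + 2*d)"
      by (simp_all only: mod_eq_dvd_iff)
    then have "n dvd ((a + 2*b) - (c + 2*d)) - ((a + b) - (c + d))" by (rule dvd_diff[rotated])
    then have "n dvd (b - d)" by (simp add: algebra_simps)
    then have bd: "b = d" using dvd_small[of n "b - d"] b d n by auto
    then have "a = c" using modinj[of n a c b] H a c n by auto
    then show "a = c \<and> b = d" using bd by simp
  qed
qed

lemma mols_transport:
  assumes M: "mols S Q R" and g: "bij_betw g X S"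
  shows "mols X (\<lambda>a b. the_inv_into X g (Q (g a) (g b))) (\<lambda>a b. the_inv_into X g (R (g a) (g b)))"
proof -
  define h where "h = the_inv_into X g"
  have hb: "bij_betw h S X" unfolding h_def by (rule bij_betw_the_inv_into[OF g])
  have gX: "g x \<in> S" if "x \<in> X" for x using g that unfolding bij_betw_def by blast
  have hS: "h y \<in> X" if "y \<in> S" for y using hb that unfolding bij_betw_def by blast
  have hinj: "y = y'" if "h y = h y'" "y \<in> S" "y' \<in> S" for y y'
    using hb that unfolding bij_betw_def inj_on_def by blast
  have ginj: "x = x'" if "g x = g x'" "x \<in> X" "x' \<in> X" for x x'
    using g that unfolding bij_betw_def inj_on_def by blast
  show ?thesis
    unfolding h_def[symmetric] mols_def
  proof (intro conjI ballI)
    fix a b assume "a \<in> X" "b \<in> X"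
    then show "h (Q (g a) (g b)) \<in> X" "h (R (g a) (g b)) \<in> X"
      using hS gX mQ[OF M] mR[OF M] by auto
  next
    fix a b c assume a: "a \<in> X" and b: "b \<in> X" and c: "c \<in> X"
    note ga = gX[OF a] and gb = gX[OF b] and gc = gX[OF c]
    show "h (Q (g a) (g c)) = h (Q (g b) (g c)) \<longrightarrow> a = b"
      using hinj mQ[OF M] Q1[OF M] ginj ga gb gc a b by metis
    show "h (Q (g c) (g a)) = h (Q (g c) (g b)) \<longrightarrow> a = b"
      using hinj mQ[OF M] Q2[OF M] ginj ga gb gc a b by metis
    show "h (R (g a) (g c)) = h (R (g b) (g c)) \<longrightarrow> a = b"
      using hinj mR[OF M] R1[OF M] ginj ga gb gc a b by metis
    show "h (R (g c) (g a)) = h (R (g c) (g b)) \<longrightarrow> a = b"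
      using hinj mR[OF M] R2[OF M] ginj ga gb gc a b by metis
  next
    fix a b c d assume a: "a \<in> X" and b: "b \<in> X" and c: "c \<in> X" and d: "d \<in> X"
    note ga = gX[OF a] and gb = gX[OF b] and gc = gX[OF c] and gd = gX[OF d]
    show "h (Q (g a) (g b)) = h (Q (g c) (g d)) \<and> h (R (g a) (g b)) = h (R (g c) (g d)) \<longrightarrow> a = c \<and> b = d"
    proof
      assume H: "h (Q (g a) (g b)) = h (Q (g c) (g d)) \<and> h (R (g a) (g b)) = h (R (g c) (g d))"
      have "Q (g a) (g b) = Q (g c) (g d)" using H hinj mQ[OF M] ga gb gc gd by blast
      moreover have "R (g a) (g b) = R (g c) (g d)" using H hinj mR[OF M] ga gb gc gd by blast
      ultimately have "g a = g c \<and> g b = g d" using QR[OF M] ga gb gc gd by blast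
      then show "a = c \<and> b = d" using ginj a b c d by blast
    qed
  qed
qed


theorem corollary3p4:
  fixes n s :: nat and X :: "'a set"
  assumes "n \<ge> 3" and "n mod 4 \<noteq> 2" and "s \<ge> 1"
    and "finite X" and "card X = n"
  shows "\<exists>\<phi>. is_AONT 1 s X \<phi>"
proof -
  have "\<exists>Q R. mols X Q R"
  proof (cases "odd n")
    case True
    define S where "S = {0..<int n}"
    have fS: "finite S" unfolding S_def by simp
    have cXS: "card X = card S" using assms(5) unfolding S_def by simp
    obtain g where g: "bij_betw g X S" using finite_same_card_bij[OF assms(4) fS cXS] by blast
    have "odd (int n)" "0 < int n" using True assms(1) by auto
    from mols_transport[OF mols_odd[OF this] g[unfolded S_def]] show ?thesis by blast
  next
    case False
    then have "n mod 4 = 0" using assms(2) by presburger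
    then obtain k where nk: "n = 4 * k" by blast
    have k0: "0 < int k" using nk assms(1) by simp
    define S where "S = {0..<2::int} \<times> {0..<2 * int k}"
    have fS: "finite S" unfolding S_def by simp
    have "card S = 2 * (2 * k)" unfolding S_def by (simp add: card_cartesian_product)
    then have cXS: "card X = card S" using assms(5) nk by simp
    obtain g where g: "bij_betw g X S" using finite_same_card_bij[OF assms(4) fS cXS] by blast
    from mols_transport[OF mols_even[OF k0] g[unfolded S_def]] show ?thesis by blast
  qed
  then obtain Q R where "mols X Q R" by blast
  from aont_from_mols[OF this assms(4,3)] show ?thesis .
qed
end
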